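(* The (a priori) Recursive Measure satisfies the strong subadditivity blocker postulate. For every SVG $\mathcal{G}$ on $N$ and every bloc $I\subseteq N$ that contains at least one YES-blocker, or that contains at least one NO-blocker, we have $$\widehat{RM'}_I\le\sum_{k\in I}RM'_k(\mathcal{G}).$$ Consequently RM also satisfies the weak subadditivity blocker postulate.
   Context: A simple voting game (SVG) is a pair $\mathcal{G}=(N,\mathcal{W})$ with $N$ a nonempty finite set of $n$ players and $\mathcal{W}\subseteq 2^N$ (the winning sets) such that: - $\mathcal{W}$ is monotone; - $\emptyset\notin\mathcal{W}$ and $N\in\mathcal{W}$. A division is $(S,N\setminus S)$ with $S\subseteq N$ the YES-voters; it is winning if $S\in\mathcal{W}$ and losing otherwise. Decisiveness and success: - Player $k$ is YES-decisive in $S$ if $k\in S\in\mathcal{W}$ and $S\setminus\{k\}\notin\mathcal{W}$. - Player $k$ is NO-decisive in $S$ if $k\notin S\notin\mathcal{W}$ and $S\cup\{k\}\in\mathcal{W}$. - Player $k$ is decisive if it is either. - Player $k$ is successful in $S$ if ($k\in S$ and $S\in\mathcal{W}$) or ($k\notin S$ and $S\notin\mathcal{W}$). Loyal children: if $S\in\mathcal{W}$, the loyal children of $S$ are the divisions $S\setminus\{m\}$ with $m\in S$ and $S\setminus\{m\}\in\mathcal{W}$. If $S\notin\mathcal{W}$, they are the divisions $S\cup\{m\}$ with $m\notin S$ and $S\cup\{m\}\notin\mathcal{W}$. The recursive efficacy score $\alpha_k(S)$ is defined by: - $\alpha_k(S)=1$ if $k$ is decisive in $S$; - $\alpha_k(S)=0$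 if $k$ is not successful in $S$; - otherwise, $\alpha_k(S)$ is the average of $\alpha_k$ over the (nonempty) set of loyal children of $S$. The a priori Recursive Measure is $RM'_k=2^{-n}\sum_{S\subseteq N}\alpha_k(S)$. Blockers: $b$ is a YES-blocker if $b\in S$ for all $S\in\mathcal{W}$, and a NO-blocker if $b\notin S$ for all $S\notin\mathcal{W}$. Bloc game: for a bloc $I$ with lead member $i\in I$, $\hat{\mathcal{G}}$ has players $(N\setminus I)\cup\{i\}$ and winning sets $$\{S\cup\{i\}:S\subseteq N\setminus I,\ S\cup I\in\mathcal{W}\}\cup\{S:S\subseteq N\setminus I,\ S\in\mathcal{W}\}.$$ $\widehat{RM'}_I$ is $RM'_i$ in $\hat{\mathcal{G}}$. *)

theory Defs
  imports Complex_Main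
begin

definition svg :: "'a set \<Rightarrow> 'a set set \<Rightarrow> bool" where
  "svg N W \<longleftrightarrow> finite N \<and> N \<noteq> {} \<and> W \<subseteq> Pow N
     \<and> (\<forall>S T. S \<in> W \<and> S \<subseteq> T \<and> T \<subseteq> N \<longrightarrow> T \<in> W)
     \<and> {} \<notin> W \<and> N \<in> W"

definition yes_decisive :: "'a set set \<Rightarrow> 'a \<Rightarrow> 'a set \<Rightarrow> bool" where
  "yes_decisive W k S \<longleftrightarrow> k \<in> S \<and> S \<in> W \<and> S - {k} \<notin> W"

definition no_decisive :: "'a set set \<Rightarrow> 'a \<Rightarrow> 'a set \<Rightarrow> bool" where
  "no_decisive W k S \<longleftrightarrow> k \<notin> S \<and> S \<notin> W \<and> insert k S \<in> W"

definition decisive :: "'a set set \<Rightarrow> 'a \<Rightarrow> 'a set \<Rightarrow> bool" where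
  "decisive W k S \<longleftrightarrow> yes_decisive W k S \<or> no_decisive W k S"

definition successful :: "'a set set \<Rightarrow> 'a \<Rightarrow> 'a set \<Rightarrow> bool" where
  "successful W k S \<longleftrightarrow> (k \<in> S \<and> S \<in> W) \<or> (k \<notin> S \<and> S \<notin> W)"

definition loyal_children :: "'a set \<Rightarrow> 'a set set \<Rightarrow> 'a set \<Rightarrow> 'a set set" where
  "loyal_children N W S =
     (if S \<in> W then {S - {m} | m. m \<in> S \<and> S - {m} \<in> W}
      else {insert m S | m. m \<in> N \<and> m \<notin> S \<and> insert m S \<notin> W})"

text \<open>Along loyal children, winning divisions strictly shrink and losing divisions
  strictly grow, so depth card N + 1 always suffices to reach a base case;
  hence alpha below coincides with the paper's recursive definition.\<close>
fun alpha_fuel :: "nat \<Rightarrow> 'a set \<Rightarrow> 'a set set \<Rightarrow> 'a \<Rightarrow> 'a set \<Rightarrow> real" where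
  "alpha_fuel 0 N W k S = 0"
| "alpha_fuel (Suc d) N W k S =
     (if decisive W k S then 1
      else if \<not> successful W k S then 0
      else (\<Sum>T\<in>loyal_children N W S. alpha_fuel d N W k T) / real (card (loyal_children N W S)))"

definition alpha :: "'a set \<Rightarrow> 'a set set \<Rightarrow> 'a \<Rightarrow> 'a set \<Rightarrow> real" where
  "alpha N W k S = alpha_fuel (Suc (card N)) N W k S"

definition RM' :: "'a set \<Rightarrow> 'a set set \<Rightarrow> 'a \<Rightarrow> real" where
  "RM' N W k = (\<Sum>S\<in>Pow N. alpha N W k S) / 2 ^ card N"

definition yes_blocker :: "'a set set \<Rightarrow> 'a \<Rightarrow> bool" where
  "yes_blocker W b \<longleftrightarrow> (\<forall>S\<in>W. b \<in> S)"

definition no_blocker :: "'a set \<Rightarrow> 'a set set \<Rightarrow> 'a \<Rightarrow> bool" where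
  "no_blocker N W b \<longleftrightarrow> (\<forall>S\<in>Pow N. S \<notin> W \<longrightarrow> b \<notin> S)"

definition bloc_players :: "'a set \<Rightarrow> 'a set \<Rightarrow> 'a \<Rightarrow> 'a set" where
  "bloc_players N I i = (N - I) \<union> {i}"

definition bloc_W :: "'a set \<Rightarrow> 'a set set \<Rightarrow> 'a set \<Rightarrow> 'a \<Rightarrow> 'a set set" where
  "bloc_W N W I i =
     {S \<union> {i} | S. S \<subseteq> N - I \<and> S \<union> I \<in> W} \<union> {S. S \<subseteq> N - I \<and> S \<in> W}"

end

theory Submission
  imports Defs
begin

definition hgt :: "'a set \<Rightarrow> 'a set set \<Rightarrow> 'a set \<Rightarrow> nat" where
  "hgt N W S = (if S \<in> W then card S else card (N - S))"

lemma lc_props: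
  assumes "finite N" "S \<subseteq> N" "T \<in> loyal_children N W S"
  shows "T \<subseteq> N \<and> hgt N W T < hgt N W S"
proof (cases "S \<in> W")
  case True
  then obtain m where m: "T = S - {m}" "m \<in> S" "S - {m} \<in> W"
    using assms(3) by (auto simp: loyal_children_def)
  have "finite S" using assms(1,2) finite_subset by blast
  then have "card (S - {m}) < card S" using m(2) by (rule card_Diff1_less)
  then show ?thesis using True m assms(2) by (auto simp: hgt_def)
next
  case False
  then obtain m where m: "T = insert m S" "m \<in> N" "m \<notin> S" "insert m S \<notin> W"
    using assms(3) by (auto simp: loyal_children_def)
  have "N - insert m S = (N - S) - {m}" by auto
  moreover have "finite (N - S)" using assms(1) by simp
  moreover have "m \<in> N - S" using m by simp
  ultimately have "card (N - insert m S) < card (N - S)" by (metis card_Diff1_less)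
  then show ?thesis using False m assms(2) by (auto simp: hgt_def)
qed

lemma fuel_step:
  assumes "finite N"
  shows "S \<subseteq> N \<Longrightarrow> hgt N W S < d \<Longrightarrow> alpha_fuel d N W k S = alpha_fuel (Suc d) N W k S"
proof (induction d arbitrary: S)
  case 0 then show ?case by simp
next
  case (Suc d)
  have "\<And>T. T \<in> loyal_children N W S \<Longrightarrow> alpha_fuel d N W k T = alpha_fuel (Suc d) N W k T"
  proof -
    fix T assume T: "T \<in> loyal_children N W S"
    from lc_props[OF assms Suc.prems(1) T] Suc.prems(2) have "T \<subseteq> N" "hgt N W T < d" by auto
    then show "alpha_fuel d N W k T = alpha_fuel (Suc d) N W k T" by (rule Suc.IH)
  qed
  then have eq: "(\<Sum>T\<in>loyal_children N W S. alpha_fuel d N W k T) = (\<Sum>T\<in>loyal_children N W S. alpha_fuel (Suc d) N W k T)"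
    by (rule sum.cong[OF refl])
  show ?case
    unfolding alpha_fuel.simps(2)[of d N W k S] alpha_fuel.simps(2)[of "Suc d" N W k S] eq by (rule refl)
qed

lemma alpha_rec:
  assumes "finite N" "S \<subseteq> N"
  shows "alpha N W k S = (if decisive W k S then 1 else if \<not> successful W k S then 0
     else (\<Sum>T\<in>loyal_children N W S. alpha N W k T) / real (card (loyal_children N W S)))"
proof -
  have hS: "hgt N W S \<le> card N"
    using assms card_mono[OF assms(1)] by (auto simp: hgt_def)
  have "\<And>T. T \<in> loyal_children N W S \<Longrightarrow> alpha_fuel (card N) N W k T = alpha N W k T"
  proof -
    fix T assume T: "T \<in> loyal_children N W S"
    from lc_props[OF assms T] hS have "T \<subseteq> N" "hgt N W T < card N" by auto
    then show "alpha_fuel (card N) N W k T = alpha N W k T"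
      unfolding alpha_def by (rule fuel_step[OF assms(1)])
  qed
  then have eq: "(\<Sum>T\<in>loyal_children N W S. alpha_fuel (card N) N W k T) = (\<Sum>T\<in>loyal_children N W S. alpha N W k T)"
    by (rule sum.cong[OF refl])
  show ?thesis
    unfolding alpha_def[of N W k S] alpha_fuel.simps(2)[of "card N" N W k S] eq by (rule refl)
qed

lemma alpha_fuel_bounds: "0 \<le> alpha_fuel d N W k S \<and> alpha_fuel d N W k S \<le> 1"
proof (induction d arbitrary: S)
  case 0 show ?case by simp
next
  case (Suc d)
  let ?C = "loyal_children N W S"
  have h0: "0 \<le> (\<Sum>T\<in>?C. alpha_fuel d N W k T)" using Suc.IH by (simp add: sum_nonneg)
  moreover have h1: "(\<Sum>T\<in>?C. alpha_fuel d N W k T) \<le> real (card ?C)"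
    using sum_bounded_above[of ?C "\<lambda>T. alpha_fuel d N W k T" 1] Suc.IH by simp
  ultimately have "0 \<le> (\<Sum>T\<in>?C. alpha_fuel d N W k T) / real (card ?C) \<and> (\<Sum>T\<in>?C. alpha_fuel d N W k T) / real (card ?C) \<le> 1"
    by (cases "card ?C = 0") (auto simp: divide_le_eq)
  then show ?case by simp
qed

lemma alpha_ge0: "0 \<le> alpha N W k S"
  unfolding alpha_def by (rule conjunct1[OF alpha_fuel_bounds])

lemma alpha_le1: "alpha N W k S \<le> 1"
  unfolding alpha_def by (rule conjunct2[OF alpha_fuel_bounds])

lemma alpha_dec: "decisive W k S \<Longrightarrow> alpha N W k S = 1"
  unfolding alpha_def by simp

lemma alpha_unsucc: "\<not> successful W k S \<Longrightarrow> alpha N W k S = 0"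
  unfolding alpha_def
  by (auto simp: decisive_def yes_decisive_def no_decisive_def successful_def)

lemma finite_lc: "finite N \<Longrightarrow> S \<subseteq> N \<Longrightarrow> finite (loyal_children N W S)"
  using lc_props by (metis (no_types, lifting) Pow_iff finite_Pow_iff finite_subset subsetI)

lemma super:
  assumes fin: "finite N" and SN: "S \<subseteq> N" and ne: "loyal_children N W S \<noteq> {}"
  shows "(\<Sum>T\<in>loyal_children N W S. alpha N W k T) \<le> alpha N W k S * real (card (loyal_children N W S))"
proof -
  let ?C = "loyal_children N W S"
  have finC: "finite ?C" by (rule finite_lc[OF fin SN])
  have cpos: "card ?C > 0" using finC ne by (simp add: card_gt_0_iff)
  show ?thesis
  proof (cases "decisive W k S")
    case True
    have "(\<Sum>T\<in>?C. alpha N W k T) \<le> real (card ?C) * 1"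
      by (rule sum_bounded_above) (rule alpha_le1)
    then show ?thesis using alpha_dec[OF True] by simp
  next
    case nd: False
    show ?thesis
    proof (cases "successful W k S")
      case False
      have "\<forall>T\<in>?C. alpha N W k T = 0"
      proof
        fix T assume T: "T \<in> ?C"
        have "\<not> successful W k T"
        proof (cases "S \<in> W")
          case True
          then show ?thesis using T False by (auto simp: loyal_children_def successful_def)
        next
          case f2: False
          then show ?thesis using T False by (auto simp: loyal_children_def successful_def)
        qed
        then show "alpha N W k T = 0" by (rule alpha_unsucc)
      qed
      then show ?thesis using alpha_ge0[of N W k S] by simp
    next
      case True
      then show ?thesis using alpha_rec[OF fin SN, of W k] nd cpos by simp
    qed
  qed
qed

definition FF :: "'a set \<Rightarrow> 'a set set \<Rightarrow> 'a set \<Rightarrow> 'a set \<Rightarrow> real" where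
  "FF N W I U = (\<Sum>k\<in>I. alpha N W k U)"

lemma FF_nonneg: "0 \<le> FF N W I U"
  unfolding FF_def by (simp add: sum_nonneg alpha_ge0)

lemma FF_ge: "finite I \<Longrightarrow> k \<in> I \<Longrightarrow> alpha N W k U \<le> FF N W I U"
  unfolding FF_def by (rule member_le_sum) (auto simp: alpha_ge0)

lemma superF:
  assumes fin: "finite N" and SN: "S \<subseteq> N" and ne: "loyal_children N W S \<noteq> {}"
  shows "(\<Sum>T\<in>loyal_children N W S. FF N W I T) \<le> FF N W I S * real (card (loyal_children N W S))"
proof -
  have "(\<Sum>T\<in>loyal_children N W S. FF N W I T) = (\<Sum>k\<in>I. \<Sum>T\<in>loyal_children N W S. alpha N W k T)"
    unfolding FF_def by (rule sum.swap)
  also have "\<dots> \<le> (\<Sum>k\<in>I. alpha N W k S * real (card (loyal_children N W S)))"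
    by (rule sum_mono) (rule super[OF assms])
  also have "\<dots> = FF N W I S * real (card (loyal_children N W S))"
    unfolding FF_def by (simp add: sum_distrib_right)
  finally show ?thesis .
qed

lemma L1:
  assumes svg: "svg N W" and I: "I \<subseteq> N"
  shows "U \<subseteq> N \<Longrightarrow> U \<notin> W \<Longrightarrow> U \<union> I \<in> W \<Longrightarrow> 1 \<le> FF N W I U"
proof (induction "card (N - U)" arbitrary: U rule: less_induct)
  case less
  have fin: "finite N" using svg by (simp add: svg_def)
  have finI: "finite I" using fin I finite_subset by blast
  have mono: "\<And>S T. S \<in> W \<Longrightarrow> S \<subseteq> T \<Longrightarrow> T \<subseteq> N \<Longrightarrow> T \<in> W" using svg by (auto simp: svg_def)
  show ?case
  proof (cases "\<exists>k\<in>I - U. insert k U \<in> W")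
    case True
    then obtain k where k: "k \<in> I" "k \<notin> U" "insert k U \<in> W" by blast
    have "decisive W k U" using k less.prems by (simp add: decisive_def no_decisive_def)
    then have "alpha N W k U = 1" by (rule alpha_dec)
    moreover have "alpha N W k U \<le> FF N W I U" using FF_ge[OF finI k(1)] .
    ultimately show ?thesis by simp
  next
    case False
    let ?C = "loyal_children N W U"
    have C: "?C = {insert m U | m. m \<in> N \<and> m \<notin> U \<and> insert m U \<notin> W}"
      using less.prems by (simp add: loyal_children_def)
    obtain k where k: "k \<in> I" "k \<notin> U"
      using less.prems by (metis Un_absorb2 subsetI)
    have "insert k U \<in> ?C" using k False I C by auto
    then have Cne: "?C \<noteq> {}" by auto
    have finC: "finite ?C" by (rule finite_lc[OF fin less.prems(1)])
    have all: "\<forall>T\<in>?C. 1 \<le> FF N W I T"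
    proof
      fix T assume T: "T \<in> ?C"
      then obtain m where m: "T = insert m U" "m \<in> N" "m \<notin> U" "insert m U \<notin> W" using C by auto
      have TN: "T \<subseteq> N" using m less.prems(1) by auto
      moreover have "T \<union> I \<in> W" using mono[OF less.prems(3), of "T \<union> I"] m I less.prems(1) by auto
      moreover have "card (N - T) < card (N - U)"
        using lc_props[OF fin less.prems(1) T] m less.prems(2) by (simp add: hgt_def)
      ultimately show "1 \<le> FF N W I T" using less.hyps m by blast
    qed
    have "real (card ?C) * 1 \<le> (\<Sum>T\<in>?C. FF N W I T)"
      by (rule sum_bounded_below) (use all in blast)
    also have "\<dots> \<le> FF N W I U * real (card ?C)" by (rule superF[OF fin less.prems(1) Cne])
    finally have "real (card ?C) * 1 \<le> FF N W I U * real (card ?C)" .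
    moreover have "card ?C > 0" using finC Cne by (simp add: card_gt_0_iff)
    ultimately show ?thesis by simp
  qed
qed

lemma L1':
  assumes svg: "svg N W" and I: "I \<subseteq> N"
  shows "V \<subseteq> N \<Longrightarrow> V \<in> W \<Longrightarrow> V - I \<notin> W \<Longrightarrow> 1 \<le> FF N W I V"
proof (induction "card V" arbitrary: V rule: less_induct)
  case less
  have fin: "finite N" using svg by (simp add: svg_def)
  have finI: "finite I" using fin I finite_subset by blast
  have mono: "\<And>S T. S \<in> W \<Longrightarrow> S \<subseteq> T \<Longrightarrow> T \<subseteq> N \<Longrightarrow> T \<in> W" using svg by (auto simp: svg_def)
  show ?case
  proof (cases "\<exists>k\<in>I \<inter> V. V - {k} \<notin> W")
    case True
    then obtain k where k: "k \<in> I" "k \<in> V" "V - {k} \<notin> W" by blast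
    have "decisive W k V" using k less.prems by (simp add: decisive_def yes_decisive_def)
    then have "alpha N W k V = 1" by (rule alpha_dec)
    moreover have "alpha N W k V \<le> FF N W I V" using FF_ge[OF finI k(1)] .
    ultimately show ?thesis by simp
  next
    case False
    let ?C = "loyal_children N W V"
    have C: "?C = {V - {m} | m. m \<in> V \<and> V - {m} \<in> W}"
      using less.prems by (simp add: loyal_children_def)
    obtain k where k: "k \<in> I" "k \<in> V"
      using less.prems by (metis Diff_disjoint Diff_triv Int_commute disjoint_iff)
    have "V - {k} \<in> ?C" using k False C by auto
    then have Cne: "?C \<noteq> {}" by auto
    have finC: "finite ?C" by (rule finite_lc[OF fin less.prems(1)])
    have all: "\<forall>T\<in>?C. 1 \<le> FF N W I T"
    proof
      fix T assume T: "T \<in> ?C"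
      then obtain m where m: "T = V - {m}" "m \<in> V" "V - {m} \<in> W" using C by auto
      have TN: "T \<subseteq> N" using m less.prems(1) by auto
      moreover have "T - I \<notin> W"
      proof
        assume "T - I \<in> W"
        then have "V - I \<in> W" using mono[of "T - I" "V - I"] m less.prems(1) by auto
        then show False using less.prems(3) by simp
      qed
      moreover have "card T < card V"
        using lc_props[OF fin less.prems(1) T] m less.prems(2) by (simp add: hgt_def)
      ultimately show "1 \<le> FF N W I T" using less.hyps m by blast
    qed
    have "real (card ?C) * 1 \<le> (\<Sum>T\<in>?C. FF N W I T)"
      by (rule sum_bounded_below) (use all in blast)
    also have "\<dots> \<le> FF N W I V * real (card ?C)" by (rule superF[OF fin less.prems(1) Cne])
    finally have "real (card ?C) * 1 \<le> FF N W I V * real (card ?C)" .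
    moreover have "card ?C > 0" using finC Cne by (simp add: card_gt_0_iff)
    ultimately show ?thesis by simp
  qed
qed

lemma sum_Pow_insert:
  assumes "finite A" "x \<notin> A"
  shows "sum f (Pow (insert x A)) = (\<Sum>S\<in>Pow A. f S + f (insert x S))"
proof -
  have inj: "inj_on (insert x) (Pow A)" using assms(2) by (auto simp: inj_on_def)
  have d: "Pow A \<inter> insert x ` Pow A = {}" using assms(2) by auto
  have "sum f (Pow (insert x A)) = sum f (Pow A \<union> insert x ` Pow A)" by (simp add: Pow_insert)
  also have "\<dots> = sum f (Pow A) + sum f (insert x ` Pow A)"
    by (rule sum.union_disjoint) (use assms(1) d in auto)
  also have "sum f (insert x ` Pow A) = (\<Sum>S\<in>Pow A. f (insert x S))"
    by (rule sum.reindex[OF inj, unfolded comp_def])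
  finally show ?thesis by (simp add: sum.distrib)
qed

lemma sum_Pow_Un:
  assumes "finite A" "finite B" "A \<inter> B = {}"
  shows "sum f (Pow (A \<union> B)) = (\<Sum>S\<in>Pow A. \<Sum>J\<in>Pow B. f (S \<union> J))"
  using assms(2,3)
proof (induction B arbitrary: f rule: finite_induct)
  case empty then show ?case by simp
next
  case (insert x B)
  have xAB: "x \<notin> A \<union> B" using insert by auto
  have "sum f (Pow (A \<union> insert x B)) = sum f (Pow (insert x (A \<union> B)))" by simp
  also have "\<dots> = (\<Sum>U\<in>Pow (A \<union> B). f U + f (insert x U))"
    by (rule sum_Pow_insert) (use assms(1) insert xAB in auto)
  also have "\<dots> = (\<Sum>S\<in>Pow A. \<Sum>J\<in>Pow B. f (S \<union> J) + f (insert x (S \<union> J)))"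
    using insert.IH[of "\<lambda>U. f U + f (insert x U)"] insert.prems by auto
  also have "\<dots> = (\<Sum>S\<in>Pow A. \<Sum>J\<in>Pow (insert x B). f (S \<union> J))"
  proof (rule sum.cong[OF refl])
    fix S assume "S \<in> Pow A"
    show "(\<Sum>J\<in>Pow B. f (S \<union> J) + f (insert x (S \<union> J))) = (\<Sum>J\<in>Pow (insert x B). f (S \<union> J))"
      using sum_Pow_insert[OF insert(1,2), of "\<lambda>J. f (S \<union> J)"] by simp
  qed
  finally show ?case .
qed


context
  fixes N :: "'a set" and W I i b
  assumes svg: "svg N W" and I: "I \<subseteq> N" and i: "i \<in> I" and b: "b \<in> I" and yb: "yes_blocker W b"
begin

lemma finN: "finite N" using svg by (simp add: svg_def)
lemma finI: "finite I" using finN I finite_subset by blast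

lemma memY: "X \<in> bloc_W N W I i \<longleftrightarrow> i \<in> X \<and> X - {i} \<subseteq> N - I \<and> (X - {i}) \<union> I \<in> W"
proof
  assume "X \<in> bloc_W N W I i"
  then consider S where "X = S \<union> {i}" "S \<subseteq> N - I" "S \<union> I \<in> W" | "X \<subseteq> N - I" "X \<in> W"
    unfolding bloc_W_def by blast
  then show "i \<in> X \<and> X - {i} \<subseteq> N - I \<and> (X - {i}) \<union> I \<in> W"
  proof cases
    case 1
    have "X - {i} = S" using 1 i by auto
    then show ?thesis using 1 by auto
  next
    case 2
    then have "b \<in> X" using yb by (simp add: yes_blocker_def)
    then show ?thesis using 2 b by auto
  qed
next
  assume h: "i \<in> X \<and> X - {i} \<subseteq> N - I \<and> (X - {i}) \<union> I \<in> W"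
  then have "X = (X - {i}) \<union> {i}" by auto
  then show "X \<in> bloc_W N W I i" unfolding bloc_W_def using h by blast
qed

lemma finM: "finite (bloc_players N I i)" using finN by (simp add: bloc_players_def)

lemma Y1:
  assumes S: "S \<subseteq> N - I"
  shows "alpha (bloc_players N I i) (bloc_W N W I i) i (insert i S) = (if S \<union> I \<in> W then 1 else 0)"
proof -
  have iS: "i \<notin> S" using S i by auto
  have e: "insert i S - {i} = S" using iS by auto
  show ?thesis
  proof (cases "S \<union> I \<in> W")
    case True
    have "insert i S \<in> bloc_W N W I i" using memY e True S by auto
    moreover have "S \<notin> bloc_W N W I i" using memY iS by auto
    ultimately have "decisive (bloc_W N W I i) i (insert i S)"
      using e by (simp add: decisive_def yes_decisive_def)
    then show ?thesis using True by (simp add: alpha_dec)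
  next
    case False
    have "insert i S \<notin> bloc_W N W I i" using memY e False by auto
    then have "\<not> successful (bloc_W N W I i) i (insert i S)" by (simp add: successful_def)
    then show ?thesis using False by (simp add: alpha_unsucc)
  qed
qed

lemma Y2:
  "S \<subseteq> N - I \<Longrightarrow> J \<subseteq> I - {b} \<Longrightarrow> alpha (bloc_players N I i) (bloc_W N W I i) i S \<le> FF N W I (S \<union> J)"
proof (induction "card (N - (S \<union> J))" arbitrary: S J rule: less_induct)
  case less
  define U where "U = S \<union> J"
  let ?M = "bloc_players N I i" and ?W = "bloc_W N W I i"
  let ?a = "alpha ?M ?W i"
  have bU: "b \<notin> U" using less.prems b by (auto simp: U_def)
  have UN: "U \<subseteq> N" using less.prems I by (auto simp: U_def)
  have UW: "U \<notin> W" using bU yb by (auto simp: yes_blocker_def)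
  have a1: "?a S \<le> 1" by (rule alpha_le1)
  show ?case
  proof (cases "S \<union> I \<in> W")
    case True
    have "U \<union> I = S \<union> I" using less.prems by (auto simp: U_def)
    then have "1 \<le> FF N W I U" using L1[OF svg I UN UW] True by simp
    then show ?thesis using a1 U_def by simp
  next
    case SI: False
    show ?thesis
    proof (cases "insert b U \<in> W")
      case True
      have "decisive W b U" using True bU UW by (simp add: decisive_def no_decisive_def)
      then have "alpha N W b U = 1" by (rule alpha_dec)
      then have "1 \<le> FF N W I U" using FF_ge[OF finI b, of N W U] by simp
      then show ?thesis using a1 U_def by simp
    next
      case bW: False
      define A where "A = (\<Sum>m\<in>N - I - S. ?a (insert m S))"
      define x where "x = card (N - I - S)"
      define y where "y = card (I - J - {b})"
      have MS: "S \<subseteq> ?M" using less.prems by (auto simp: bloc_players_def)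
      have iS: "i \<notin> S" using less.prems i by auto
      have SnW: "S \<notin> ?W" using iS memY by auto
      have eS: "insert i S - {i} = S" using iS by auto
      have iSnW: "insert i S \<notin> ?W" using memY SI eS by auto
      have nd: "\<not> decisive ?W i S" using iS SnW iSnW
        by (simp add: decisive_def yes_decisive_def no_decisive_def)
      have sc: "successful ?W i S" using iS SnW by (simp add: successful_def)
      have Chat: "loyal_children ?M ?W S = insert (insert i S) ((\<lambda>m. insert m S) ` (N - I - S))"
      proof -
        have "loyal_children ?M ?W S = {insert m S | m. m \<in> ?M \<and> m \<notin> S \<and> insert m S \<notin> ?W}"
          using SnW by (simp add: loyal_children_def)
        also have "\<dots> = insert (insert i S) ((\<lambda>m. insert m S) ` (N - I - S))"
        proof
          show "{insert m S | m. m \<in> ?M \<and> m \<notin> S \<and> insert m S \<notin> ?W} \<subseteq> insert (insert i S) ((\<lambda>m. insert m S) ` (N - I - S))"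
            by (auto simp: bloc_players_def)
          show "insert (insert i S) ((\<lambda>m. insert m S) ` (N - I - S)) \<subseteq> {insert m S | m. m \<in> ?M \<and> m \<notin> S \<and> insert m S \<notin> ?W}"
          proof
            fix T assume "T \<in> insert (insert i S) ((\<lambda>m. insert m S) ` (N - I - S))"
            then consider "T = insert i S" | m where "m \<in> N - I - S" "T = insert m S" by auto
            then show "T \<in> {insert m S | m. m \<in> ?M \<and> m \<notin> S \<and> insert m S \<notin> ?W}"
            proof cases
              case 1 then show ?thesis using iS iSnW by (auto simp: bloc_players_def)
            next
              case 2
              have "i \<notin> insert m S" using 2 iS i by auto
              then have "insert m S \<notin> ?W" using memY[of "insert m S"] by simp
              then show ?thesis using 2 by (auto simp: bloc_players_def)
            qed
          qed
        qed
        finally show ?thesis .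
      qed
      have rec: "?a S = (\<Sum>T\<in>loyal_children ?M ?W S. ?a T) / real (card (loyal_children ?M ?W S))"
        using alpha_rec[OF finM MS, of ?W i] nd sc by simp
      have inj: "inj_on (\<lambda>m. insert m S) (N - I - S)" by (auto simp: inj_on_def)
      have notin: "insert i S \<notin> (\<lambda>m. insert m S) ` (N - I - S)" using i iS by auto
      have finimg: "finite ((\<lambda>m. insert m S) ` (N - I - S))" using finN by simp
      have sumC: "(\<Sum>T\<in>loyal_children ?M ?W S. ?a T) = ?a (insert i S) + A"
        unfolding Chat A_def by (simp add: sum.insert[OF finimg notin] sum.reindex[OF inj])
      have cardC: "card (loyal_children ?M ?W S) = x + 1"
        unfolding Chat x_def using card_insert_disjoint[OF finimg notin] card_image[OF inj] by simp
      have a0: "?a (insert i S) = 0" using Y1 less.prems(1) SI by simp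
      have aeq: "?a S * (real x + 1) = A" using rec sumC cardC a0 by (simp add: field_simps)
      let ?C = "loyal_children N W U"
      have C: "?C = (\<lambda>m. insert m U) ` (N - U)"
      proof -
        have "?C = {insert m U | m. m \<in> N \<and> m \<notin> U \<and> insert m U \<notin> W}"
          using UW by (simp add: loyal_children_def)
        also have "\<dots> = (\<lambda>m. insert m U) ` (N - U)"
        proof -
          have "\<And>m. m \<in> N - U \<Longrightarrow> insert m U \<notin> W"
          proof -
            fix m assume m: "m \<in> N - U"
            show "insert m U \<notin> W"
            proof (cases "m = b")
              case True then show ?thesis using bW by simp
            next
              case False then have "b \<notin> insert m U" using bU by simp
              then show ?thesis using yb by (auto simp: yes_blocker_def)
            qed
          qed
          then show ?thesis by auto
        qed
        finally show ?thesis .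
      qed
      have injU: "inj_on (\<lambda>m. insert m U) (N - U)" by (auto simp: inj_on_def)
      have bNU: "b \<in> N - U" using b I bU by auto
      have Cne: "?C \<noteq> {}" using C bNU by auto
      have cardCU: "card ?C = card (N - U)" using C card_image[OF injU] by simp
      have sup: "(\<Sum>m\<in>N - U. FF N W I (insert m U)) \<le> FF N W I U * real (card (N - U))"
        using superF[OF finN UN Cne, of I] C cardCU by (simp add: sum.reindex[OF injU])
      define \<beta> where "\<beta> m = (if m \<in> N - I then ?a (insert m S) else if m = b then 0 else ?a S)" for m
      have bnd: "\<And>m. m \<in> N - U \<Longrightarrow> \<beta> m \<le> FF N W I (insert m U)"
      proof -
        fix m assume m: "m \<in> N - U"
        have cardlt: "card (N - insert m U) < card (N - U)"
        proof -
          have "N - insert m U = (N - U) - {m}" by auto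
          then show ?thesis using m finN by (metis card_Diff1_less finite_Diff)
        qed
        consider "m \<in> N - I" | "m = b" | "m \<in> I - {b} - J" using m U_def by auto
        then show "\<beta> m \<le> FF N W I (insert m U)"
        proof cases
          case 1
          then have mS: "m \<in> N - I - S" using m U_def by auto
          have eq: "insert m U = insert m S \<union> J" by (simp add: U_def)
          have "insert m S \<subseteq> N - I" using mS less.prems by auto
          then have "?a (insert m S) \<le> FF N W I (insert m S \<union> J)"
            using less.hyps[of "insert m S" J] cardlt eq less.prems(2) U_def by simp
          then show ?thesis using 1 eq \<beta>_def by simp
        next
          case 2 then show ?thesis using FF_nonneg b \<beta>_def by simp
        next
          case 3
          have eq: "insert m U = S \<union> insert m J" by (simp add: U_def)
          have "insert m J \<subseteq> I - {b}" using 3 less.prems by auto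
          then have "?a S \<le> FF N W I (S \<union> insert m J)"
            using less.hyps[of S "insert m J"] cardlt eq less.prems(1) U_def by simp
          then show ?thesis using 3 eq \<beta>_def by simp
        qed
      qed
      have split: "N - U = (N - I - S) \<union> (I - J)" using less.prems I by (auto simp: U_def)
      have disj: "(N - I - S) \<inter> (I - J) = {}" by auto
      have bIJ: "b \<in> I - J" using b less.prems by auto
      have s1: "(\<Sum>m\<in>N - I - S. \<beta> m) = A" unfolding A_def \<beta>_def by (rule sum.cong) auto
      have s2: "(\<Sum>m\<in>I - J. \<beta> m) = real y * ?a S"
      proof -
        have "(\<Sum>m\<in>I - J. \<beta> m) = \<beta> b + (\<Sum>m\<in>I - J - {b}. \<beta> m)"
          using sum.remove[OF _ bIJ] finI by simp
        also have "(\<Sum>m\<in>I - J - {b}. \<beta> m) = (\<Sum>m\<in>I - J - {b}. ?a S)"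
          unfolding \<beta>_def by (rule sum.cong) auto
        finally show ?thesis using b by (simp add: \<beta>_def y_def)
      qed
      have sumb: "(\<Sum>m\<in>N - U. \<beta> m) = A + real y * ?a S"
      proof -
        have "sum \<beta> (N - I - S \<union> (I - J)) = sum \<beta> (N - I - S) + sum \<beta> (I - J)"
          by (rule sum.union_disjoint) (use finN finI disj in auto)
        then show ?thesis unfolding split s1 s2 .
      qed
      have cardIJ: "card (I - J) = y + 1"
        using card_Diff1_less bIJ finI y_def by (metis Suc_eq_plus1 card_Diff_singleton_if card.remove finite_Diff)
      have cardNU: "card (N - U) = x + y + 1"
        unfolding split x_def using card_Un_disjoint[OF _ _ disj] finN finI cardIJ by simp
      have "A + real y * ?a S \<le> FF N W I U * real (card (N - U))"
        using sum_mono[of "N - U" \<beta> "\<lambda>m. FF N W I (insert m U)"] bnd sup sumb by simp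
      then have "?a S * (real x + real y + 1) \<le> FF N W I U * (real x + real y + 1)"
        using aeq cardNU by (simp add: algebra_simps)
      then have "?a S \<le> FF N W I U" by (simp add: mult_le_cancel_right add_pos_nonneg)
      then show ?thesis by (simp add: U_def)
    qed
  qed
qed

lemma Y3:
  assumes S: "S \<subseteq> N - I" and J: "J \<subseteq> I - {b}"
  shows "alpha (bloc_players N I i) (bloc_W N W I i) i S + alpha (bloc_players N I i) (bloc_W N W I i) i (insert i S)
    \<le> FF N W I (S \<union> J) + FF N W I (insert b (S \<union> J))"
proof (cases "S \<union> I \<in> W")
  case True
  have bU: "b \<notin> S \<union> J" using S J b by auto
  have UN: "S \<union> J \<subseteq> N" using S J I by auto
  have UW: "S \<union> J \<notin> W" using bU yb by (auto simp: yes_blocker_def)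
  have e1: "(S \<union> J) \<union> I = S \<union> I" using J by auto
  have f1: "1 \<le> FF N W I (S \<union> J)" using L1[OF svg I UN UW] True e1 by simp
  have f2: "1 \<le> FF N W I (insert b (S \<union> J))"
  proof (cases "insert b (S \<union> J) \<in> W")
    case True
    have "insert b (S \<union> J) - {b} = S \<union> J" using bU by auto
    then have "decisive W b (insert b (S \<union> J))" using True UW by (simp add: decisive_def yes_decisive_def)
    then show ?thesis using alpha_dec FF_ge[OF finI b] by metis
  next
    case False
    have "insert b (S \<union> J) \<subseteq> N" using UN b I by auto
    moreover have "insert b (S \<union> J) \<union> I = S \<union> I" using J b by auto
    ultimately show ?thesis using L1[OF svg I _ False] True by simp
  qed
  show ?thesis using Y1[OF S] True alpha_le1[of "bloc_players N I i" "bloc_W N W I i" i S] f1 f2 by simp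
next
  case False
  then show ?thesis using Y1[OF S] Y2[OF S J] FF_nonneg[of N W I "insert b (S \<union> J)"] by simp
qed

end


context
  fixes N :: "'a set" and W I i b
  assumes svg: "svg N W" and I: "I \<subseteq> N" and i: "i \<in> I" and b: "b \<in> I" and nb: "no_blocker N W b"
begin

lemma finN': "finite N" using svg by (simp add: svg_def)
lemma finI': "finite I" using finN' I finite_subset by blast
lemma finM': "finite (bloc_players N I i)" using finN' by (simp add: bloc_players_def)

lemma nbW: "T \<subseteq> N \<Longrightarrow> b \<in> T \<Longrightarrow> T \<in> W"
  using nb by (auto simp: no_blocker_def)

lemma memN: "X \<in> bloc_W N W I i \<longleftrightarrow> (i \<in> X \<and> X - {i} \<subseteq> N - I) \<or> (X \<subseteq> N - I \<and> X \<in> W)"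
proof
  assume "X \<in> bloc_W N W I i"
  then consider S where "X = S \<union> {i}" "S \<subseteq> N - I" "S \<union> I \<in> W" | "X \<subseteq> N - I" "X \<in> W"
    unfolding bloc_W_def by blast
  then show "(i \<in> X \<and> X - {i} \<subseteq> N - I) \<or> (X \<subseteq> N - I \<and> X \<in> W)"
  proof cases
    case 1
    have "X - {i} = S" using 1 i by auto
    then show ?thesis using 1 by auto
  next
    case 2 then show ?thesis by auto
  qed
next
  assume h: "(i \<in> X \<and> X - {i} \<subseteq> N - I) \<or> (X \<subseteq> N - I \<and> X \<in> W)"
  then show "X \<in> bloc_W N W I i"
  proof
    assume h1: "i \<in> X \<and> X - {i} \<subseteq> N - I"
    then have "X = (X - {i}) \<union> {i}" by auto
    moreover have "(X - {i}) \<union> I \<in> W" using nbW[of "(X - {i}) \<union> I"] h1 I b by auto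
    ultimately show ?thesis unfolding bloc_W_def using h1 by blast
  next
    assume "X \<subseteq> N - I \<and> X \<in> W"
    then show ?thesis unfolding bloc_W_def by blast
  qed
qed

lemma N1:
  assumes S: "S \<subseteq> N - I"
  shows "alpha (bloc_players N I i) (bloc_W N W I i) i S = (if S \<in> W then 0 else 1)"
proof -
  have iS: "i \<notin> S" using S i by auto
  show ?thesis
  proof (cases "S \<in> W")
    case True
    have "S \<in> bloc_W N W I i" using memN[of S] True S by auto
    then have "\<not> successful (bloc_W N W I i) i S" using iS by (simp add: successful_def)
    then show ?thesis using True by (simp add: alpha_unsucc)
  next
    case False
    have "S \<notin> bloc_W N W I i" using memN[of S] False iS by auto
    moreover have "insert i S \<in> bloc_W N W I i" using memN[of "insert i S"] S by auto
    ultimately have "decisive (bloc_W N W I i) i S"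
      using iS by (simp add: decisive_def no_decisive_def)
    then show ?thesis using False by (simp add: alpha_dec)
  qed
qed

lemma N2:
  "S \<subseteq> N - I \<Longrightarrow> J \<subseteq> I - {b} \<Longrightarrow> alpha (bloc_players N I i) (bloc_W N W I i) i (insert i S) \<le> FF N W I (insert b (S \<union> J))"
proof (induction "card (S \<union> J)" arbitrary: S J rule: less_induct)
  case less
  define V where "V = insert b (S \<union> J)"
  let ?M = "bloc_players N I i" and ?W = "bloc_W N W I i"
  let ?a = "alpha ?M ?W i"
  define X where "X = insert i S"
  have bSJ: "b \<notin> S \<union> J" using less.prems b by auto
  have VN: "V \<subseteq> N" using less.prems I b by (auto simp: V_def)
  have VW: "V \<in> W" using nbW[OF VN] by (simp add: V_def)
  have a1: "?a X \<le> 1" by (rule alpha_le1)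
  have finSJ: "finite (S \<union> J)" using VN finN' by (metis V_def finite_insert finite_subset)
  show ?case
  proof (cases "S \<in> W")
    case False
    have "V - I = S" using less.prems b by (auto simp: V_def)
    then have "1 \<le> FF N W I V" using L1'[OF svg I VN VW] False by simp
    then show ?thesis using a1 V_def X_def by simp
  next
    case SW: True
    show ?thesis
    proof (cases "S \<union> J \<in> W")
      case False
      have "V - {b} = S \<union> J" using bSJ by (auto simp: V_def)
      then have "decisive W b V" using False VW by (simp add: decisive_def yes_decisive_def V_def)
      then have "alpha N W b V = 1" by (rule alpha_dec)
      then have "1 \<le> FF N W I V" using FF_ge[OF finI' b, of N W V] by simp
      then show ?thesis using a1 V_def X_def by simp
    next
      case SJW: True
      define A where "A = (\<Sum>m\<in>S. ?a (insert i (S - {m})))"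
      define x where "x = card S"
      define y where "y = card J"
      have iS: "i \<notin> S" using less.prems i by auto
      have MX: "X \<subseteq> ?M" using less.prems by (auto simp: bloc_players_def X_def)
      have XW: "X \<in> ?W" using memN[of X] less.prems iS by (auto simp: X_def)
      have eX: "X - {i} = S" using iS by (auto simp: X_def)
      have SWh: "S \<in> ?W" using memN[of S] less.prems SW by auto
      have nd: "\<not> decisive ?W i X" using eX SWh
        by (simp add: decisive_def yes_decisive_def no_decisive_def X_def)
      have sc: "successful ?W i X" using XW by (simp add: successful_def X_def)
      have Chat: "loyal_children ?M ?W X = insert S ((\<lambda>m. insert i (S - {m})) ` S)"
      proof -
        have "loyal_children ?M ?W X = {X - {m} | m. m \<in> X \<and> X - {m} \<in> ?W}"
          using XW by (simp add: loyal_children_def)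
        also have "\<dots> = insert S ((\<lambda>m. insert i (S - {m})) ` S)"
        proof
          show "{X - {m} | m. m \<in> X \<and> X - {m} \<in> ?W} \<subseteq> insert S ((\<lambda>m. insert i (S - {m})) ` S)"
          proof
            fix T assume "T \<in> {X - {m} | m. m \<in> X \<and> X - {m} \<in> ?W}"
            then obtain m where m: "T = X - {m}" "m \<in> X" by blast
            show "T \<in> insert S ((\<lambda>m. insert i (S - {m})) ` S)"
            proof (cases "m = i")
              case True then show ?thesis using m eX by simp
            next
              case False
              then have "m \<in> S" "T = insert i (S - {m})" using m by (auto simp: X_def)
              then show ?thesis by blast
            qed
          qed
          show "insert S ((\<lambda>m. insert i (S - {m})) ` S) \<subseteq> {X - {m} | m. m \<in> X \<and> X - {m} \<in> ?W}"
          proof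
            fix T assume "T \<in> insert S ((\<lambda>m. insert i (S - {m})) ` S)"
            then consider "T = S" | m where "m \<in> S" "T = insert i (S - {m})" by auto
            then show "T \<in> {X - {m} | m. m \<in> X \<and> X - {m} \<in> ?W}"
            proof cases
              case 1
              have "T = X - {i}" "i \<in> X" "X - {i} \<in> ?W" using 1 eX SWh by (auto simp: X_def)
              then show ?thesis by blast
            next
              case 2
              have mi: "m \<noteq> i" using 2 iS by auto
              have e: "T = X - {m}" unfolding X_def 2(2) using mi by blast
              have "T \<in> ?W" using memN[of T] 2 less.prems by auto
              then show ?thesis using e 2 by (auto simp: X_def)
            qed
          qed
        qed
        finally show ?thesis .
      qed
      have rec: "?a X = (\<Sum>T\<in>loyal_children ?M ?W X. ?a T) / real (card (loyal_children ?M ?W X))"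
        using alpha_rec[OF finM' MX, of ?W i] nd sc by simp
      have inj: "inj_on (\<lambda>m. insert i (S - {m})) S"
      proof (rule inj_onI)
        fix m m' assume mm: "m \<in> S" "m' \<in> S" "insert i (S - {m}) = insert i (S - {m'})"
        then have "S - {m} = S - {m'}" using iS insert_ident[of i "S - {m}" "S - {m'}"] by blast
        then show "m = m'" using mm by blast
      qed
      have notin: "S \<notin> (\<lambda>m. insert i (S - {m})) ` S" using iS by auto
      have finS: "finite S" using finSJ by simp
      have finimg: "finite ((\<lambda>m. insert i (S - {m})) ` S)" using finS by simp
      have sumC: "(\<Sum>T\<in>loyal_children ?M ?W X. ?a T) = ?a S + A"
        unfolding Chat A_def by (simp add: sum.insert[OF finimg notin] sum.reindex[OF inj])
      have cardC: "card (loyal_children ?M ?W X) = x + 1"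
        unfolding Chat x_def using card_insert_disjoint[OF finimg notin] card_image[OF inj] by simp
      have a0: "?a S = 0" using N1 less.prems(1) SW by simp
      have aeq: "?a X * (real x + 1) = A" using rec sumC cardC a0 by (simp add: field_simps)
      let ?C = "loyal_children N W V"
      have C: "?C = (\<lambda>m. V - {m}) ` V"
      proof -
        have "?C = {V - {m} | m. m \<in> V \<and> V - {m} \<in> W}"
          using VW by (simp add: loyal_children_def)
        also have "\<dots> = (\<lambda>m. V - {m}) ` V"
        proof -
          have "\<And>m. m \<in> V \<Longrightarrow> V - {m} \<in> W"
          proof -
            fix m assume m: "m \<in> V"
            show "V - {m} \<in> W"
            proof (cases "m = b")
              case True
              have "V - {m} = S \<union> J" using True bSJ by (auto simp: V_def)
              then show ?thesis using SJW by simp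
            next
              case False then show ?thesis using nbW[of "V - {m}"] VN by (auto simp: V_def)
            qed
          qed
          then show ?thesis by auto
        qed
        finally show ?thesis .
      qed
      have injV: "inj_on (\<lambda>m. V - {m}) V" by (auto simp: inj_on_def)
      have bV: "b \<in> V" by (simp add: V_def)
      have Cne: "?C \<noteq> {}" using C bV by auto
      have cardCV: "card ?C = card V" using C card_image[OF injV] by simp
      have sup: "(\<Sum>m\<in>V. FF N W I (V - {m})) \<le> FF N W I V * real (card V)"
        using superF[OF finN' VN Cne, of I] C cardCV by (simp add: sum.reindex[OF injV])
      define \<beta> where "\<beta> m = (if m \<in> S then ?a (insert i (S - {m})) else if m = b then 0 else ?a X)" for m
      have bnd: "\<And>m. m \<in> V \<Longrightarrow> \<beta> m \<le> FF N W I (V - {m})"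
      proof -
        fix m assume m: "m \<in> V"
        consider "m \<in> S" | "m = b" | "m \<in> J" "m \<notin> S" using m V_def by auto
        then show "\<beta> m \<le> FF N W I (V - {m})"
        proof cases
          case 1
          have mJ: "m \<notin> J" "m \<noteq> b" using 1 less.prems b by auto
          have eq: "V - {m} = insert b ((S - {m}) \<union> J)" using mJ by (auto simp: V_def)
          have cl: "card ((S - {m}) \<union> J) < card (S \<union> J)"
          proof -
            have "(S - {m}) \<union> J = (S \<union> J) - {m}" using mJ by auto
            then show ?thesis using 1 finSJ by (metis UnI1 card_Diff1_less)
          qed
          have "S - {m} \<subseteq> N - I" using less.prems by auto
          then have "?a (insert i (S - {m})) \<le> FF N W I (insert b ((S - {m}) \<union> J))"
            using less.hyps[of "S - {m}" J] cl less.prems(2) by simp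
          then show ?thesis using 1 eq \<beta>_def by simp
        next
          case 2 then show ?thesis using FF_nonneg less.prems b \<beta>_def by auto
        next
          case 3
          have mb: "m \<noteq> b" using 3 less.prems by auto
          have eq: "V - {m} = insert b (S \<union> (J - {m}))" using 3 mb by (auto simp: V_def)
          have cl: "card (S \<union> (J - {m})) < card (S \<union> J)"
          proof -
            have "S \<union> (J - {m}) = (S \<union> J) - {m}" using 3 by auto
            then show ?thesis using 3 finSJ by (metis UnI2 card_Diff1_less)
          qed
          have "J - {m} \<subseteq> I - {b}" using less.prems by auto
          then have "?a X \<le> FF N W I (insert b (S \<union> (J - {m})))"
            using less.hyps[of S "J - {m}"] cl less.prems(1) X_def by simp
          then show ?thesis using 3 eq mb \<beta>_def by simp
        qed
      qed
      have split: "V = S \<union> insert b J" by (auto simp: V_def)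
      have disj: "S \<inter> insert b J = {}" using less.prems b by auto
      have bJ: "b \<notin> J" using less.prems by auto
      have finJ: "finite J" using finSJ by simp
      have s1: "(\<Sum>m\<in>S. \<beta> m) = A" unfolding A_def \<beta>_def by (rule sum.cong) auto
      have s2: "(\<Sum>m\<in>insert b J. \<beta> m) = real y * ?a X"
      proof -
        have "(\<Sum>m\<in>insert b J. \<beta> m) = \<beta> b + (\<Sum>m\<in>J. \<beta> m)"
          using sum.insert[OF finJ bJ] by simp
        also have "(\<Sum>m\<in>J. \<beta> m) = (\<Sum>m\<in>J. ?a X)"
          unfolding \<beta>_def using disj bJ by (intro sum.cong) auto
        moreover have "b \<notin> S" using b less.prems by auto
        ultimately show ?thesis by (simp add: \<beta>_def y_def)
      qed
      have sumb: "(\<Sum>m\<in>V. \<beta> m) = A + real y * ?a X"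
      proof -
        have "sum \<beta> (S \<union> insert b J) = sum \<beta> S + sum \<beta> (insert b J)"
          by (rule sum.union_disjoint) (use finS finJ disj in auto)
        then show ?thesis unfolding split s1 s2 .
      qed
      have cardV: "card V = x + y + 1"
        unfolding split x_def y_def using card_Un_disjoint[OF finS _ disj] finJ bJ by simp
      have "A + real y * ?a X \<le> FF N W I V * real (card V)"
        using sum_mono[of V \<beta> "\<lambda>m. FF N W I (V - {m})"] bnd sup sumb by simp
      then have "?a X * (real x + real y + 1) \<le> FF N W I V * (real x + real y + 1)"
        using aeq cardV by (simp add: algebra_simps)
      then have "?a X \<le> FF N W I V" by (simp add: mult_le_cancel_right add_pos_nonneg)
      then show ?thesis by (simp add: V_def X_def)
    qed
  qed
qed

lemma N3:
  assumes S: "S \<subseteq> N - I" and J: "J \<subseteq> I - {b}"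
  shows "alpha (bloc_players N I i) (bloc_W N W I i) i S + alpha (bloc_players N I i) (bloc_W N W I i) i (insert i S)
    \<le> FF N W I (S \<union> J) + FF N W I (insert b (S \<union> J))"
proof (cases "S \<in> W")
  case False
  have bU: "b \<notin> S \<union> J" using S J b by auto
  have UN: "S \<union> J \<subseteq> N" using S J I by auto
  have VN: "insert b (S \<union> J) \<subseteq> N" using UN b I by auto
  have VW: "insert b (S \<union> J) \<in> W" using nbW[OF VN] by simp
  have e1: "insert b (S \<union> J) - I = S" using S J b by auto
  have f2: "1 \<le> FF N W I (insert b (S \<union> J))" using L1'[OF svg I VN VW] False e1 by simp
  have f1: "1 \<le> FF N W I (S \<union> J)"
  proof (cases "S \<union> J \<in> W")
    case True
    have "(S \<union> J) - I = S" using S J by auto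
    then show ?thesis using L1'[OF svg I UN True] False by simp
  next
    case f: False
    then have "decisive W b (S \<union> J)" using VW bU by (simp add: decisive_def no_decisive_def)
    then show ?thesis using alpha_dec FF_ge[OF finI' b] by metis
  qed
  show ?thesis using N1[OF S] False alpha_le1[of "bloc_players N I i" "bloc_W N W I i" i "insert i S"] f1 f2 by simp
next
  case True
  then show ?thesis using N1[OF S] N2[OF S J] FF_nonneg[of N W I "S \<union> J"] by simp
qed

end


lemma combine:
  assumes svg: "svg N W" and I: "I \<subseteq> N" and i: "i \<in> I" and b: "b \<in> I"
  and H: "\<And>S J. S \<subseteq> N - I \<Longrightarrow> J \<subseteq> I - {b} \<Longrightarrow>
     alpha (bloc_players N I i) (bloc_W N W I i) i S + alpha (bloc_players N I i) (bloc_W N W I i) i (insert i S)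
       \<le> FF N W I (S \<union> J) + FF N W I (insert b (S \<union> J))"
  shows "RM' (bloc_players N I i) (bloc_W N W I i) i \<le> (\<Sum>k\<in>I. RM' N W k)"
proof -
  let ?a = "alpha (bloc_players N I i) (bloc_W N W I i) i"
  define A where "A = N - I"
  define B where "B = I - {b}"
  have finN: "finite N" using svg by (simp add: svg_def)
  have finA: "finite A" using finN by (simp add: A_def)
  have finB: "finite B" using finN I by (metis B_def finite_Diff finite_subset)
  have disj: "A \<inter> B = {}" by (auto simp: A_def B_def)
  have bAB: "b \<notin> A \<union> B" using b by (auto simp: A_def B_def)
  have NAB: "N = insert b (A \<union> B)" using I b by (auto simp: A_def B_def)
  have iA: "i \<notin> A" using i by (simp add: A_def)
  have M: "bloc_players N I i = insert i A" by (auto simp: bloc_players_def A_def)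
  define G where "G = (\<Sum>S\<in>Pow A. ?a S + ?a (insert i S))"
  have lhs: "(\<Sum>X\<in>Pow (bloc_players N I i). ?a X) = G"
    unfolding M G_def by (rule sum_Pow_insert[OF finA iA])
  have cardM: "card (bloc_players N I i) = card A + 1" unfolding M using finA iA by simp
  have cardN: "card N = card A + card B + 1"
    unfolding NAB using finA finB bAB disj by (simp add: card_Un_disjoint)
  have rhs: "(\<Sum>k\<in>I. RM' N W k) = (\<Sum>U\<in>Pow N. FF N W I U) / 2 ^ card N"
    unfolding RM'_def FF_def by (simp add: sum_divide_distrib[symmetric] sum.swap[of _ I])
  have "(\<Sum>U\<in>Pow N. FF N W I U) = (\<Sum>U\<in>Pow (A \<union> B). FF N W I U + FF N W I (insert b U))"
    unfolding NAB by (rule sum_Pow_insert) (use finA finB bAB in auto)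
  also have "\<dots> = (\<Sum>S\<in>Pow A. \<Sum>J\<in>Pow B. FF N W I (S \<union> J) + FF N W I (insert b (S \<union> J)))"
    by (rule sum_Pow_Un[OF finA finB disj])
  also have "\<dots> \<ge> (\<Sum>S\<in>Pow A. \<Sum>J\<in>Pow B. ?a S + ?a (insert i S))"
    by (intro sum_mono H) (auto simp: A_def B_def)
  finally have ge: "(\<Sum>S\<in>Pow A. \<Sum>J\<in>Pow B. ?a S + ?a (insert i S)) \<le> (\<Sum>U\<in>Pow N. FF N W I U)" .
  have "(\<Sum>S\<in>Pow A. \<Sum>J\<in>Pow B. ?a S + ?a (insert i S)) = 2 ^ card B * G"
    unfolding G_def using finB by (simp add: card_Pow sum_distrib_left)
  with ge have ge2: "2 ^ card B * G \<le> (\<Sum>U\<in>Pow N. FF N W I U)" by simp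
  have "RM' (bloc_players N I i) (bloc_W N W I i) i = G / 2 ^ (card A + 1)"
    unfolding RM'_def lhs cardM ..
  also have "\<dots> = (2 ^ card B * G) / 2 ^ card N"
    unfolding cardN by (simp add: power_add)
  also have "\<dots> \<le> (\<Sum>U\<in>Pow N. FF N W I U) / 2 ^ card N"
    using ge2 by (simp add: divide_right_mono)
  finally show ?thesis using rhs by simp
qed

theorem theorem3:
  fixes N :: "'a set" and W :: "'a set set" and I :: "'a set" and i :: 'a
  assumes "svg N W"
    and "I \<subseteq> N" and "i \<in> I"
    and "(\<exists>b\<in>I. yes_blocker W b) \<or> (\<exists>b\<in>I. no_blocker N W b)"
  shows "RM' (bloc_players N I i) (bloc_W N W I i) i \<le> (\<Sum>k\<in>I. RM' N W k)"
  using assms(4)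
proof
  assume "\<exists>b\<in>I. yes_blocker W b"
  then obtain b where b: "b \<in> I" "yes_blocker W b" by blast
  show ?thesis
    by (rule combine[OF assms(1,2,3) b(1)]) (rule Y3[OF assms(1,2,3) b])
next
  assume "\<exists>b\<in>I. no_blocker N W b"
  then obtain b where b: "b \<in> I" "no_blocker N W b" by blast
  show ?thesis
    by (rule combine[OF assms(1,2,3) b(1)]) (rule N3[OF assms(1,2,3) b])
qed

end
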